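(* Let $(\widetilde{\mathbf{x}}_\ell,y_\ell)$, $\ell=1,\dots,N$, be data with $\widetilde{\mathbf{x}}_\ell\in\mathbb{R}^d$, and let $y^N=(y_1,\dots,y_N)^\top$. Assume the Gram matrix $G$ is invertible. Write $G=U\Lambda U^\top$, where $U$ is orthogonal and $\Lambda=\mathrm{diag}(\widehat\mu_1,\dots,\widehat\mu_N)$. Let $D=\mathrm{diag}\big(\frac{\widehat\mu_1}{\widehat\mu_1+\lambda},\dots,\frac{\widehat\mu_N}{\widehat\mu_N+\lambda}\big)$. Then the $L^2$-boosting estimate after $m$ steps satisfies $$\|\widehat f^{(m)}\|_H^2=\frac1N(y^N)^\top U\big(I-(I-D)^m\big)^2\Lambda^{-1}U^\top y^N .$$
   Context: $H$ is an RKHS with positive definite kernel $K$; in the paper, $H=H_1\oplus\cdots\oplus H_d$ is the additive RKHS of Gaussian kernels on the coordinates. Gram matrix: $G_{ij}=K(\widetilde{\mathbf{x}}_i,\widetilde{\mathbf{x}}_j)/N$. Base learner: kernel ridge regression with fixed $\lambda>0$. Given $u\in\mathbb{R}^N$ it returns $\widehat g=\frac1{\sqrt N}\sum_\ell\beta_\ell K(\cdot,\widetilde{\mathbf{x}}_\ell)$ with $\beta=\frac1{\sqrt N}(G+\lambda I)^{-1}u$. Its fitted values are $Su$ with $S=G(G+\lambda I)^{-1}$. $L^2$-boosting: $\widehat f^{(0)}=0$ and $\widehat f^{(m+1)}=\widehat f^{(m)}+$(base learner fit to the residuals $y_\ell-\widehat f^{(m)}(\widetilde{\mathbf{x}}_\ell)$).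 The fitted values after $m$ steps are $(I-(I-S)^m)y^N$. *)

theory Defs
  imports "HOL-Analysis.Analysis"
begin

text \<open>The RKHS H is modelled abstractly as a real inner product space 'h together
with the kernel sections kx :: 'x \<Rightarrow> 'h (kx a = K(.,a)). The reproducing
property f(a) = <f, K(.,a)>_H gives point evaluation, and K(a,b) = <K(.,a),K(.,b)>_H.
Data points are indexed by a finite type 'n with N = CARD('n).\<close>

definition diag_mat :: "real^'n \<Rightarrow> real^'n^'n" where
  "diag_mat v = (\<chi> i j. if i = j then v $ i else 0)"

definition mat_pow :: "real^'n^'n \<Rightarrow> nat \<Rightarrow> real^'n^'n" where
  "mat_pow A m = (((**) A) ^^ m) (mat 1)"

definition rk_eval :: "('x \<Rightarrow> 'h::real_inner) \<Rightarrow> 'h \<Rightarrow> 'x \<Rightarrow> real" where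
  "rk_eval kx f a = inner f (kx a)"

definition gram :: "('x \<Rightarrow> 'x \<Rightarrow> real) \<Rightarrow> ('n::finite \<Rightarrow> 'x) \<Rightarrow> real^'n^'n" where
  "gram K xs = (\<chi> i j. K (xs i) (xs j) / real CARD('n))"

definition krr :: "('x \<Rightarrow> 'h::real_inner) \<Rightarrow> ('x \<Rightarrow> 'x \<Rightarrow> real) \<Rightarrow> real
                   \<Rightarrow> ('n::finite \<Rightarrow> 'x) \<Rightarrow> real^'n \<Rightarrow> 'h" where
  "krr kx K lam xs u =
     (let N = real CARD('n);
          beta = (1 / sqrt N) *s (matrix_inv (gram K xs + scaleR lam (mat 1)) *v u)
      in scaleR (1 / sqrt N) (\<Sum>l\<in>UNIV. scaleR (beta $ l) (kx (xs l))))"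

primrec boost :: "('x \<Rightarrow> 'h::real_inner) \<Rightarrow> ('x \<Rightarrow> 'x \<Rightarrow> real) \<Rightarrow> real
                  \<Rightarrow> ('n::finite \<Rightarrow> 'x) \<Rightarrow> real^'n \<Rightarrow> nat \<Rightarrow> 'h" where
  "boost kx K lam xs y 0 = 0"
| "boost kx K lam xs y (Suc m) =
     boost kx K lam xs y m +
     krr kx K lam xs (\<chi> l. y $ l - rk_eval kx (boost kx K lam xs y m) (xs l))"

end

theory Submission
  imports Defs "HOL-Analysis.Analysis"
begin

lemma matrix_inv_eq:
  fixes A B :: "real^'n^'n"
  assumes "A ** B = mat 1"
  shows "matrix_inv A = B"
proof -
  have BA: "B ** A = mat 1" using assms matrix_left_right_inverse by blast
  have ex: "\<exists>A'. A ** A' = mat 1 \<and> A' ** A = mat 1" using assms BA by blast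
  have "A ** matrix_inv A = mat 1 \<and> matrix_inv A ** A = mat 1"
    unfolding matrix_inv_def by (rule someI_ex[OF ex])
  hence "matrix_inv A ** A = mat 1" by blast
  hence "matrix_inv A ** A ** B = B" by simp
  thus ?thesis by (simp add: assms flip: matrix_mul_assoc)
qed

lemma diag_entry: "diag_mat a $ i $ j = (if i = j then a$i else 0)"
  by (simp add: diag_mat_def)

lemma diag_mulv: "diag_mat a *v w = (\<chi> i. a$i * w$i)"
proof -
  have "(\<Sum>j\<in>UNIV. diag_mat a $ i $ j * w$j) = a$i * w$i" for i
  proof -
    have "(\<Sum>j\<in>UNIV. diag_mat a $ i $ j * w$j) = (\<Sum>j\<in>UNIV. if j = i then a$i * w$j else 0)"
      by (rule sum.cong) (auto simp: diag_entry)
    also have "\<dots> = a$i * w$i" by simp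
    finally show ?thesis .
  qed
  thus ?thesis by (simp only: matrix_vector_mult_def vec_eq_iff vec_lambda_beta) simp
qed

lemma diag_mul: "diag_mat a ** diag_mat b = diag_mat (\<chi> i. a$i * b$i)"
proof -
  have "(\<Sum>k\<in>UNIV. diag_mat a $ i $ k * diag_mat b $ k $ j) = diag_mat (\<chi> i. a$i * b$i) $ i $ j" for i j
  proof -
    have "(\<Sum>k\<in>UNIV. diag_mat a $ i $ k * diag_mat b $ k $ j) = (\<Sum>k\<in>UNIV. if k = i then a$i * diag_mat b $ i $ j else 0)"
      by (rule sum.cong) (auto simp: diag_entry)
    also have "\<dots> = a$i * diag_mat b $ i $ j" by simp
    also have "\<dots> = diag_mat (\<chi> i. a$i * b$i) $ i $ j" by (simp add: diag_entry)
    finally show ?thesis .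
  qed
  thus ?thesis by (simp only: matrix_matrix_mult_def vec_eq_iff vec_lambda_beta) simp
qed

lemma mat1_diag: "(mat 1 :: real^'n^'n) = diag_mat (\<chi> i. 1)"
  by (simp add: diag_mat_def mat_def vec_eq_iff)

lemma diag_diff: "diag_mat a - diag_mat b = diag_mat (a - b)"
  by (simp add: diag_mat_def vec_eq_iff)

lemma diag_add: "diag_mat a + diag_mat b = diag_mat (a + b)"
  by (simp add: diag_mat_def vec_eq_iff)

lemma diag_scale: "c *\<^sub>R diag_mat a = diag_mat (c *\<^sub>R a)"
  by (simp add: diag_mat_def vec_eq_iff)

lemma mat_pow_diag: "mat_pow (diag_mat a) k = diag_mat (\<chi> i. a$i ^ k)"
proof (induction k)
  case 0 then show ?case by (simp add: mat_pow_def mat1_diag)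
next
  case (Suc k)
  have "mat_pow (diag_mat a) (Suc k) = diag_mat a ** mat_pow (diag_mat a) k"
    by (simp add: mat_pow_def)
  then show ?case using Suc by (simp add: diag_mul)
qed

lemma eval_comb:
  fixes kx :: "'x \<Rightarrow> 'h::real_inner" and xs :: "'n::finite \<Rightarrow> 'x"
  assumes rep: "\<And>a b. K a b = inner (kx a) (kx b)"
  shows "rk_eval kx (\<Sum>l\<in>UNIV. (c$l) *\<^sub>R kx (xs l)) (xs i) = real CARD('n) * (gram K xs *v c)$i"
proof -
  have N: "real CARD('n) \<noteq> 0" by simp
  have "rk_eval kx (\<Sum>l\<in>UNIV. (c$l) *\<^sub>R kx (xs l)) (xs i) = (\<Sum>l\<in>UNIV. c$l * inner (kx (xs l)) (kx (xs i)))"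
    unfolding rk_eval_def by (simp only: inner_sum_left inner_scaleR_left)
  also have "\<dots> = (\<Sum>l\<in>UNIV. real CARD('n) * (K (xs i) (xs l) / real CARD('n) * c$l))"
    by (intro sum.cong refl) (simp add: rep inner_commute[of "kx (xs i)"] N)
  also have "\<dots> = real CARD('n) * (gram K xs *v c)$i"
    by (simp add: gram_def matrix_vector_mult_def sum_distrib_left)
  finally show ?thesis .
qed

lemma norm_comb:
  fixes kx :: "'x \<Rightarrow> 'h::real_inner" and xs :: "'n::finite \<Rightarrow> 'x"
  assumes rep: "\<And>a b. K a b = inner (kx a) (kx b)"
  shows "(norm (\<Sum>l\<in>UNIV. (c$l) *\<^sub>R kx (xs l)))\<^sup>2 = real CARD('n) * (c \<bullet> (gram K xs *v c))"
proof -
  have N: "real CARD('n) > 0" by simp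
  have "(norm (\<Sum>l\<in>UNIV. (c$l) *\<^sub>R kx (xs l)))\<^sup>2 =
     (\<Sum>i\<in>UNIV. \<Sum>j\<in>UNIV. c$i * c$j * K (xs i) (xs j))"
    unfolding power2_norm_eq_inner
    apply (simp add: inner_sum_left inner_sum_right rep sum_distrib_left mult.assoc)
    apply (intro sum.cong refl) apply (simp add: inner_commute)
    done
  also have "\<dots> = real CARD('n) * (c \<bullet> (gram K xs *v c))"
    using N by (simp add: gram_def matrix_vector_mult_def inner_vec_def sum_distrib_left field_simps)
  finally show ?thesis .
qed

lemma krr_comb:
  fixes kx :: "'x \<Rightarrow> 'h::real_inner" and xs :: "'n::finite \<Rightarrow> 'x"
  shows "krr kx K lam xs u = (\<Sum>l\<in>UNIV. ((1 / real CARD('n)) * (matrix_inv (gram K xs + lam *\<^sub>R mat 1) *v u)$l) *\<^sub>R kx (xs l))"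
proof -
  have N: "real CARD('n) > 0" by simp
  have s: "1 / sqrt (real CARD('n)) * (1 / sqrt (real CARD('n))) = 1 / real CARD('n)"
    using N by (simp add: power_divide flip: power2_eq_square)
  show ?thesis unfolding krr_def Let_def
    by (simp add: scaleR_sum_right s mult.assoc[symmetric])
qed

lemma orth_dot:
  fixes U :: "real^'n^'n"
  assumes "orthogonal_matrix U"
  shows "(U *v a) \<bullet> (U *v b) = a \<bullet> b"
proof -
  have UtU: "transpose U ** U = mat 1" using assms by (simp add: orthogonal_matrix_def)
  have "(U *v a) \<bullet> (U *v b) = (a v* transpose U) \<bullet> (U *v b)"
    by (simp only: vector_transpose_matrix)
  also have "\<dots> = a \<bullet> (transpose U *v (U *v b))" by (rule dot_lmul_matrix)
  also have "transpose U *v (U *v b) = b"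
    by (simp only: matrix_vector_mul_assoc UtU matrix_vector_mul_lid)
  finally show ?thesis .
qed

lemma dot_mulv_left:
  fixes U :: "real^'n^'n"
  shows "y \<bullet> (U *v w) = (transpose U *v y) \<bullet> w"
  by (metis dot_lmul_matrix transpose_matrix_vector)

lemma scal:
  fixes mu lam z :: real
  assumes "mu \<noteq> 0" "mu + lam \<noteq> 0"
  shows "(1-(1-mu/(mu+lam))^k)/mu * z + (z - mu*((1-(1-mu/(mu+lam))^k)/mu*z))/(mu+lam)
     = (1-(1-mu/(mu+lam))^Suc k)/mu * z"
proof -
  have g: "(1-p)/mu * z + (z - mu*((1-p)/mu*z))/(mu+lam) = (1 - p*(1-mu/(mu+lam)))/mu * z" for p
    using assms by (simp add: field_simps)
  show ?thesis using g[of "(1-mu/(mu+lam))^k"] by (simp add: mult.commute)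
qed

lemma scal2:
  fixes mu q z :: real
  assumes "mu \<noteq> 0"
  shows "(q/mu * z) * (mu * (q/mu * z)) = z * (q^2 * (1/mu * z))"
  using assms by (simp add: field_simps power2_eq_square)

lemma scal3:
  fixes m l t :: real
  assumes "m + l \<noteq> 0"
  shows "m * (1 / (m + l) * t) + l * (1 / (m + l) * t) = t"
proof -
  have "m * (1 / (m + l) * t) + l * (1 / (m + l) * t) = ((m + l) * (1 / (m + l))) * t"
    by (simp only: algebra_simps)
  also have "\<dots> = t" using assms by simp
  finally show ?thesis .
qed

theorem lemma3:
  fixes K :: "real^'d \<Rightarrow> real^'d \<Rightarrow> real"
    and kx :: "real^'d \<Rightarrow> 'h::real_inner"
    and xs :: "'n::finite \<Rightarrow> real^'d"
    and y :: "real^'n"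
    and lam :: real
    and U :: "real^'n^'n"
    and mu :: "real^'n"
    and m :: nat
  assumes reproducing: "\<And>a b. K a b = inner (kx a) (kx b)"
    and lam_pos: "lam > 0"
    and G_inv: "invertible (gram K xs)"
    and U_orth: "orthogonal_matrix U"
    and eig: "gram K xs = U ** diag_mat mu ** transpose U"
  shows "(norm (boost kx K lam xs y m))\<^sup>2 =
    (1 / real CARD('n)) *
      (y \<bullet> ((U ** mat_pow (mat 1 - mat_pow (mat 1 - diag_mat (\<chi> i. mu $ i / (mu $ i + lam))) m) 2
               ** matrix_inv (diag_mat mu) ** transpose U) *v y))"
proof -
  define N where "N = real CARD('n)"
  have N: "N > 0" unfolding N_def by simp
  define G where "G = gram K xs"
  have UtU: "transpose U ** U = mat 1" and UUt: "U ** transpose U = mat 1"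
    using U_orth by (auto simp: orthogonal_matrix_def)
  have UtUv: "transpose U *v (U *v w) = w" for w
    by (simp only: matrix_vector_mul_assoc UtU matrix_vector_mul_lid)
  have UUtv: "U *v (transpose U *v w) = w" for w
    by (simp only: matrix_vector_mul_assoc UUt matrix_vector_mul_lid)
  have GU: "G *v (U *v w) = U *v (\<chi> i. mu$i * w$i)" for w
    unfolding G_def eig
    by (simp only: matrix_vector_mul_assoc[symmetric] UtUv diag_mulv)
  have mu_nz: "mu$i \<noteq> 0" for i
  proof
    assume 0: "mu$i = 0"
    define w :: "real^'n" where "w = axis i 1"
    have "G *v (U *v w) = U *v 0"
      unfolding GU by (rule arg_cong[where f="(*v) U"]) (simp add: vec_eq_iff w_def axis_def 0)
    also have "\<dots> = G *v (U *v 0)" by simp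
    finally have "U *v w = U *v 0"
      by (rule injD[OF inj_matrix_vector_mult[OF G_inv[folded G_def]]])
    hence "transpose U *v (U *v w) = transpose U *v (U *v 0)" by (rule arg_cong)
    hence "w = 0" by (simp only: UtUv)
    thus False unfolding w_def by (simp add: axis_eq_0_iff)
  qed
  have mu_nn: "mu$i \<ge> 0" for i
  proof -
    define w :: "real^'n" where "w = axis i 1"
    have "0 \<le> (norm (\<Sum>l\<in>UNIV. ((U *v w)$l) *\<^sub>R kx (xs l)))\<^sup>2" by (rule zero_le_power2)
    also have "\<dots> = N * ((U *v w) \<bullet> (G *v (U *v w)))"
      unfolding G_def N_def by (rule norm_comb[OF reproducing])
    finally have "N * ((U *v w) \<bullet> (G *v (U *v w))) \<ge> 0" .
    hence "(U *v w) \<bullet> (G *v (U *v w)) \<ge> 0" using N by (simp add: zero_le_mult_iff)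
    moreover have "(U *v w) \<bullet> (G *v (U *v w)) = mu$i"
      unfolding GU orth_dot[OF U_orth]
      by (simp add: w_def inner_axis')
    ultimately show ?thesis by simp
  qed
  have mu_lam: "mu$i + lam > 0" for i using mu_nn[of i] lam_pos by simp
  define Dl where "Dl = diag_mat (\<chi> i. 1 / (mu$i + lam))"
  have P: "(G + lam *\<^sub>R mat 1) ** (U ** Dl ** transpose U) = mat 1"
    unfolding matrix_eq
  proof
    fix x :: "real^'n"
    define v where "v = Dl *v (transpose U *v x)"
    have "(G + lam *\<^sub>R mat 1) ** (U ** Dl ** transpose U) *v x = (G + lam *\<^sub>R mat 1) *v (U *v v)"
      unfolding v_def by (simp only: matrix_vector_mul_assoc[symmetric])
    also have "\<dots> = U *v (\<chi> i. mu$i * v$i) + U *v (lam *\<^sub>R v)"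
      by (simp only: matrix_vector_mult_add_rdistrib GU scaleR_matrix_vector_assoc[symmetric] matrix_vector_mul_lid matrix_vector_mult_scaleR)
    also have "\<dots> = U *v ((\<chi> i. mu$i * v$i) + lam *\<^sub>R v)"
      by (simp only: matrix_vector_right_distrib)
    also have "(\<chi> i. mu$i * v$i) + lam *\<^sub>R v = transpose U *v x"
      unfolding v_def Dl_def diag_mulv using scal3[OF less_imp_neq[OF mu_lam, symmetric]]
      by (simp add: vec_eq_iff del: transpose_matrix_vector)
    also have "U *v (transpose U *v x) = mat 1 *v x" by (simp only: UUtv matrix_vector_mul_lid)
    finally show "(G + lam *\<^sub>R mat 1) ** (U ** Dl ** transpose U) *v x = mat 1 *v x" .
  qed
  have Minv: "matrix_inv (G + lam *\<^sub>R mat 1) *v (U *v w) = U *v (\<chi> i. w$i / (mu$i+lam))" for w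
    unfolding matrix_inv_eq[OF P] Dl_def
    by (simp only: matrix_vector_mul_assoc[symmetric] UtUv diag_mulv)
      (intro arg_cong[where f="(*v) U"], simp add: vec_eq_iff)
  define z where "z = transpose U *v y"
  have yz: "y = U *v z" unfolding z_def by (simp only: UUtv)
  define d where "d i = mu$i / (mu$i + lam)" for i
  define e where "e k = (\<chi> i. (1 - (1 - d i)^k) / mu$i)" for k
  define c where "c k = (1/N) *\<^sub>R (U *v (\<chi> i. e k $ i * z$i))" for k
  have Gc: "N *\<^sub>R (G *v c k) = U *v (\<chi> i. mu$i * (e k $ i * z$i))" for k
    unfolding c_def using N
    by (simp only: matrix_vector_mult_scaleR GU scaleR_scaleR) simp
  have B: "boost kx K lam xs y k = (\<Sum>l\<in>UNIV. (c k $ l) *\<^sub>R kx (xs l))" for k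
  proof (induction k)
    case 0
    have z0: "(\<chi> i. (0::real)) = 0" by (simp add: vec_eq_iff)
    show ?case by (simp add: c_def e_def z0)
  next
    case (Suc k)
    define r where "r = (\<chi> l. y $ l - rk_eval kx (boost kx K lam xs y k) (xs l))"
    have ev: "rk_eval kx (\<Sum>l\<in>UNIV. (c k $ l) *\<^sub>R kx (xs l)) (xs i) = N * (G *v c k)$i" for i
      unfolding N_def G_def by (rule eval_comb[OF reproducing])
    have "r = y - N *\<^sub>R (G *v c k)"
      unfolding r_def Suc by (simp add: vec_eq_iff ev)
    also have "\<dots> = U *v (z - (\<chi> i. mu$i * (e k $ i * z$i)))"
      unfolding Gc by (subst yz) (simp only: matrix_vector_mult_diff_distrib)
    also have "(z - (\<chi> i. mu$i * (e k $ i * z$i))) = (\<chi> i. z$i - mu$i * (e k $ i * z$i))"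
      by (simp add: vec_eq_iff)
    finally have r: "r = U *v (\<chi> i. z$i - mu$i * (e k $ i * z$i))" .
    have vec: "(\<chi> i. e k $ i * z$i) + (\<chi> i. (z$i - mu$i * (e k $ i * z$i)) / (mu$i+lam))
        = (\<chi> i. e (Suc k) $ i * z$i)"
    proof (rule iffD2[OF vec_eq_iff], rule allI)
      fix i
      show "((\<chi> i. e k $ i * z$i) + (\<chi> i. (z$i - mu$i * (e k $ i * z$i)) / (mu$i+lam))) $ i
        = (\<chi> i. e (Suc k) $ i * z$i) $ i"
        unfolding vector_add_component vec_lambda_beta e_def d_def
        by (rule scal[OF mu_nz less_imp_neq[OF mu_lam, symmetric]])
    qed
    have cc: "c k + (1/N) *\<^sub>R (matrix_inv (G + lam *\<^sub>R mat 1) *v r) = c (Suc k)"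
      unfolding r Minv c_def vec[symmetric] matrix_vector_right_distrib scaleR_right_distrib vec_lambda_beta ..
    have bs: "boost kx K lam xs y (Suc k) = boost kx K lam xs y k + krr kx K lam xs r"
      unfolding r_def by simp
    show ?case
      unfolding bs Suc krr_comb G_def[symmetric] N_def[symmetric] cc[symmetric]
      by (simp add: scaleR_add_left sum.distrib)
  qed
  define q where "q i = 1 - (1 - d i)^m" for i
  have M1: "mat 1 - mat_pow (mat 1 - diag_mat (\<chi> i. mu $ i / (mu $ i + lam))) m = diag_mat (\<chi> i. q i)"
    unfolding mat1_diag diag_diff mat_pow_diag q_def d_def
    by (simp add: diag_mat_def vec_eq_iff)
  have M2: "mat_pow (diag_mat (\<chi> i. q i)) 2 = diag_mat (\<chi> i. (q i)^2)"
    by (simp add: mat_pow_diag)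
  have M3: "matrix_inv (diag_mat mu) = diag_mat (\<chi> i. 1 / mu$i)"
    by (rule matrix_inv_eq) (simp add: diag_mul mat1_diag mu_nz)
  have R: "(U ** mat_pow (mat 1 - mat_pow (mat 1 - diag_mat (\<chi> i. mu $ i / (mu $ i + lam))) m) 2
               ** matrix_inv (diag_mat mu) ** transpose U) *v y
        = U *v (\<chi> i. (q i)^2 * (1 / mu$i * z$i))"
    unfolding M1 M2 M3 z_def
    by (simp only: matrix_vector_mul_assoc[symmetric] diag_mulv vec_lambda_beta)
  have eq: "e m $ i = q i / mu$i" for i unfolding e_def q_def by simp
  have e1: "(norm (boost kx K lam xs y m))\<^sup>2 = N * (c m \<bullet> (G *v c m))"
    unfolding B N_def G_def by (rule norm_comb[OF reproducing])
  have e2: "N * (c m \<bullet> (G *v c m)) = (1/N) * ((U *v (\<chi> i. e m $ i * z$i)) \<bullet> (N *\<^sub>R (G *v c m)))"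
    unfolding c_def inner_scaleR_left inner_scaleR_right matrix_vector_mult_scaleR
    by (rule mult.left_commute)
  have e3: "(1/N) * ((U *v (\<chi> i. e m $ i * z$i)) \<bullet> (N *\<^sub>R (G *v c m)))
     = (1/N) * ((\<chi> i. e m $ i * z$i) \<bullet> (\<chi> i. mu$i * (e m $ i * z$i)))"
    unfolding Gc orth_dot[OF U_orth] by (rule refl)
  have e4: "(1/N) * ((\<chi> i. e m $ i * z$i) \<bullet> (\<chi> i. mu$i * (e m $ i * z$i)))
     = (1/N) * (z \<bullet> (\<chi> i. (q i)^2 * (1 / mu$i * z$i)))"
    unfolding inner_vec_def vec_lambda_beta inner_real_def
    by (intro arg_cong[where f="\<lambda>x. (1/N) * x"] sum.cong refl) (simp only: eq scal2[OF mu_nz])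
  have e5: "(1/N) * (z \<bullet> (\<chi> i. (q i)^2 * (1 / mu$i * z$i)))
     = (1/N) * (y \<bullet> (U *v (\<chi> i. (q i)^2 * (1 / mu$i * z$i))))"
    unfolding dot_mulv_left z_def by (rule refl)
  have final: "(norm (boost kx K lam xs y m))\<^sup>2 = (1/N) * (y \<bullet> (U *v (\<chi> i. (q i)^2 * (1 / mu$i * z$i))))"
    by (rule trans[OF e1 trans[OF e2 trans[OF e3 trans[OF e4 e5]]]])
  show ?thesis unfolding R using final unfolding N_def .
qed

end
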